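(* Let $\hat N=\sum_{j\ge0}\hat n_j$ be the particle number operator and $\overline N=\langle\hat N\rangle_{\mathrm{gc}}$. Then $$\langle(\hat N-\overline N)^4\rangle_{\mathrm{gc}}\le9\langle(\hat N-\overline N)^2\rangle_{\mathrm{gc}}^2+\langle(\hat N-\overline N)^2\rangle_{\mathrm{gc}}.$$
   Context: Fix a nondecreasing sequence $(E_j)_{j\ge0}$ of nonnegative one-particle energies (temperature absorbed) and $\mu<E_0$. $\hat n_j=a_j^*a_j$ is the occupation number operator of level $j$ on bosonic Fock space, and $\langle\cdot\rangle_{\mathrm{gc}}$ is the expectation in the grand canonical Gibbs state $Z_{\mathrm{gc}}(\mu)^{-1}\exp(-\sum_j(E_j-\mu)\hat n_j)$, assumed to have finite partition function and moments. *)

theory Defs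
  imports "HOL-Analysis.Analysis"
begin

text \<open>Bosonic Fock space is spanned by the occupation-number basis vectors, indexed by
finitely supported occupation configurations. The grand canonical Gibbs state and the
operators n_j and N are all diagonal in this basis, so expectations of functions of the
total particle number operator are weighted sums over configurations.\<close>

definition occ_configs :: "(nat \<Rightarrow> nat) set" where
  "occ_configs = {n. finite {j. n j \<noteq> 0}}"

definition Ntot :: "(nat \<Rightarrow> nat) \<Rightarrow> nat" where
  "Ntot n = (\<Sum>j\<in>{j. n j \<noteq> 0}. n j)"

definition gibbs_weight :: "(nat \<Rightarrow> real) \<Rightarrow> real \<Rightarrow> (nat \<Rightarrow> nat) \<Rightarrow> real" where
  "gibbs_weight E \<mu> n = exp (- (\<Sum>j\<in>{j. n j \<noteq> 0}. (E j - \<mu>) * real (n j)))"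

definition Z_gc :: "(nat \<Rightarrow> real) \<Rightarrow> real \<Rightarrow> real" where
  "Z_gc E \<mu> = infsum (gibbs_weight E \<mu>) occ_configs"

definition gc_expect :: "(nat \<Rightarrow> real) \<Rightarrow> real \<Rightarrow> (real \<Rightarrow> real) \<Rightarrow> real" where
  "gc_expect E \<mu> f =
     infsum (\<lambda>n. gibbs_weight E \<mu> n * f (real (Ntot n))) occ_configs / Z_gc E \<mu>"

end

theory Submission imports Defs begin

lemma sum_shift_real:
  fixes f :: "nat \<Rightarrow> real"
  assumes fin: "finite {i. m i \<noteq> 0}"
  shows "(\<Sum>i\<in>{i. (m(j := Suc (m j))) i \<noteq> 0}. f i * real ((m(j := Suc (m j))) i))
        = f j + (\<Sum>i\<in>{i. m i \<noteq> 0}. f i * real (m i))"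
proof -
  define S where "S = {i. m i \<noteq> 0}"
  have S': "{i. (m(j := Suc (m j))) i \<noteq> 0} = insert j S" by (auto simp: S_def)
  have fS: "finite S" using fin by (simp add: S_def)
  have a: "(\<Sum>i\<in>insert j S. f i * real ((m(j := Suc (m j))) i))
      = f j * real (Suc (m j)) + (\<Sum>i\<in>S - {j}. f i * real ((m(j := Suc (m j))) i))"
    using fS by (simp add: sum.insert_remove)
  have b: "(\<Sum>i\<in>S - {j}. f i * real ((m(j := Suc (m j))) i)) = (\<Sum>i\<in>S - {j}. f i * real (m i))"
    by (rule sum.cong) auto
  have c: "(\<Sum>i\<in>insert j S. f i * real (m i)) = f j * real (m j) + (\<Sum>i\<in>S - {j}. f i * real (m i))"
    using fS by (simp add: sum.insert_remove)
  have d: "(\<Sum>i\<in>insert j S. f i * real (m i)) = (\<Sum>i\<in>S. f i * real (m i))"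
    using fS by (auto simp: sum.insert_if S_def)
  show ?thesis unfolding S' using a b c d by (simp add: S_def algebra_simps)
qed

lemma Ntot_real: "real (Ntot n) = (\<Sum>i\<in>{i. n i \<noteq> 0}. 1 * real (n i))"
  by (simp add: Ntot_def)

lemma Ntot_shift:
  assumes "m \<in> occ_configs"
  shows "Ntot (m(j := Suc (m j))) = Suc (Ntot m)"
proof -
  have "real (Ntot (m(j := Suc (m j)))) = 1 + real (Ntot m)"
    unfolding Ntot_real by (rule sum_shift_real) (use assms in \<open>simp add: occ_configs_def\<close>)
  then show ?thesis by linarith
qed

lemma gw_shift:
  assumes "m \<in> occ_configs"
  shows "gibbs_weight E \<mu> (m(j := Suc (m j))) = exp (-(E j - \<mu>)) * gibbs_weight E \<mu> m"
  unfolding gibbs_weight_def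
  by (subst sum_shift_real) (use assms in \<open>simp_all add: occ_configs_def exp_add[symmetric]\<close>)

lemma shift_occ: "m \<in> occ_configs \<Longrightarrow> m(j := Suc (m j)) \<in> occ_configs"
proof -
  assume "m \<in> occ_configs"
  then have "finite (insert j {i. m i \<noteq> 0})" by (simp add: occ_configs_def)
  moreover have "{i. (m(j := Suc (m j))) i \<noteq> 0} \<subseteq> insert j {i. m i \<noteq> 0}" by auto
  ultimately have "finite {i. (m(j := Suc (m j))) i \<noteq> 0}" by (rule finite_subset[rotated])
  then show ?thesis unfolding occ_configs_def by simp
qed

lemma unshift_occ: "m \<in> occ_configs \<Longrightarrow> m(j := k) \<in> occ_configs"
proof -
  assume "m \<in> occ_configs"
  then have "finite (insert j {i. m i \<noteq> 0})" by (simp add: occ_configs_def)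
  moreover have "{i. (m(j := k)) i \<noteq> 0} \<subseteq> insert j {i. m i \<noteq> 0}" by auto
  ultimately have "finite {i. (m(j := k)) i \<noteq> 0}" by (rule finite_subset[rotated])
  then show ?thesis unfolding occ_configs_def by simp
qed

lemma shift_identity:
  fixes g :: "nat \<Rightarrow> real"
  shows "infsum (\<lambda>n. gibbs_weight E \<mu> n * real (n j) * g (Ntot n)) occ_configs
     = exp (-(E j - \<mu>)) * infsum (\<lambda>n. gibbs_weight E \<mu> n * (real (n j) + 1) * g (Suc (Ntot n))) occ_configs"
proof -
  define T where "T = {n \<in> occ_configs. n j \<noteq> 0}"
  have "infsum (\<lambda>n. gibbs_weight E \<mu> n * real (n j) * g (Ntot n)) occ_configs
      = infsum (\<lambda>n. gibbs_weight E \<mu> n * real (n j) * g (Ntot n)) T"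
    by (rule infsum_cong_neutral) (auto simp: T_def)
  also have "\<dots> = infsum (\<lambda>n. exp (-(E j - \<mu>)) * (gibbs_weight E \<mu> n * (real (n j) + 1) * g (Suc (Ntot n)))) occ_configs"
  proof (rule infsum_reindex_bij_witness[symmetric, where i="\<lambda>n. n(j := n j - 1)" and j="\<lambda>n. n(j := Suc (n j))"])
    fix a assume a: "a \<in> occ_configs"
    show "(a(j := Suc (a j)))(j := (a(j := Suc (a j))) j - 1) = a" by simp
    show "a(j := Suc (a j)) \<in> T" using a by (simp add: T_def shift_occ)
    show "gibbs_weight E \<mu> (a(j := Suc (a j))) * real ((a(j := Suc (a j))) j) * g (Ntot (a(j := Suc (a j))))
        = exp (-(E j - \<mu>)) * (gibbs_weight E \<mu> a * (real (a j) + 1) * g (Suc (Ntot a)))"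
      using a by (simp add: gw_shift Ntot_shift algebra_simps)
  next
    fix b assume b: "b \<in> T"
    show "(b(j := b j - 1))(j := Suc ((b(j := b j - 1)) j)) = b" using b by (auto simp: T_def)
    show "b(j := b j - 1) \<in> occ_configs" using b by (simp add: T_def unshift_occ)
  qed
  also have "\<dots> = exp (-(E j - \<mu>)) * infsum (\<lambda>n. gibbs_weight E \<mu> n * (real (n j) + 1) * g (Suc (Ntot n))) occ_configs"
    by (rule infsum_cmult_right')
  finally show ?thesis .
qed

lemma Ntot_has_sum:
  assumes "n \<in> occ_configs"
  shows "((\<lambda>j. real (n j)) has_sum real (Ntot n)) UNIV"
proof -
  have fin: "finite {j. n j \<noteq> 0}" using assms by (simp add: occ_configs_def)
  have "((\<lambda>j. real (n j)) has_sum (\<Sum>j\<in>{j. n j \<noteq> 0}. real (n j))) {j. n j \<noteq> 0}"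
    using fin by (rule has_sum_finite)
  then have "((\<lambda>j. real (n j)) has_sum (\<Sum>j\<in>{j. n j \<noteq> 0}. real (n j))) UNIV"
    by (subst (asm) has_sum_cong_neutral[where T=UNIV]) auto
  then show ?thesis by (simp add: Ntot_def)
qed

lemma fubini:
  fixes w g :: "(nat \<Rightarrow> nat) \<Rightarrow> real"
  assumes wnn: "\<And>n. w n \<ge> 0"
    and sm: "(\<lambda>n. w n * real (Ntot n) * \<bar>g n\<bar>) summable_on occ_configs"
  shows "((\<lambda>j. infsum (\<lambda>n. w n * real (n j) * g n) occ_configs)
          has_sum infsum (\<lambda>n. w n * real (Ntot n) * g n) occ_configs) UNIV"
proof -
  define F where "F = (\<lambda>(n::nat\<Rightarrow>nat, j::nat). w n * real (n j) * g n)"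
  have in1: "((\<lambda>j. w n * real (n j) * c) has_sum (w n * real (Ntot n) * c)) UNIV"
    if "n \<in> occ_configs" for n c
    using has_sum_cmult_left[OF has_sum_cmult_right[OF Ntot_has_sum[OF that]]] by simp
  have "(\<lambda>(n, j). w n * real (n j) * \<bar>g n\<bar>) summable_on Sigma occ_configs (\<lambda>_. UNIV)"
    by (rule summable_on_SigmaI[OF _ sm]) (auto intro: in1 simp: wnn)
  then have "(\<lambda>p. norm (F p)) summable_on occ_configs \<times> UNIV"
    by (rule summable_on_cong[THEN iffD1, rotated]) (auto simp: F_def abs_mult wnn)
  then have Fs: "F summable_on occ_configs \<times> UNIV"
    using summable_on_iff_abs_summable_on_real by blast
  define S where "S = infsum F (occ_configs \<times> UNIV)"
  have FS: "(F has_sum S) (Sigma occ_configs (\<lambda>_. UNIV))" using Fs by (simp add: S_def)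
  have 1: "((\<lambda>n. w n * real (Ntot n) * g n) has_sum S) occ_configs"
    by (rule has_sum_Sigma'[OF FS]) (auto simp: F_def intro: in1)
  have FS': "((\<lambda>(j, n). F (n, j)) has_sum S) (Sigma UNIV (\<lambda>_. occ_configs))"
    using FS has_sum_swap by fastforce
  have sw: "(\<lambda>(j, n). F (n, j)) summable_on UNIV \<times> occ_configs" using FS' by (auto simp: summable_on_def)
  have 2: "((\<lambda>j. infsum (\<lambda>n. w n * real (n j) * g n) occ_configs) has_sum S) UNIV"
  proof (rule has_sum_Sigma'[OF FS'])
    fix j :: nat
    have "(\<lambda>n. F (n, j)) summable_on occ_configs"
      using summable_on_SigmaD1[of "\<lambda>j n. F (n, j)" UNIV "\<lambda>_. occ_configs" j] sw by simp
    then show "((\<lambda>n. case (j, n) of (j, n) \<Rightarrow> F (n, j)) has_sum infsum (\<lambda>n. w n * real (n j) * g n) occ_configs) occ_configs"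
      by (simp add: F_def)
  qed
  show ?thesis using 1 2 by (simp add: infsumI)
qed


lemma solve_lin:
  fixes q p0 p r :: real
  assumes "q \<noteq> 1" "p0 = q * (p0 + 1)" "p = q * (p + r)"
  shows "p = p0 * r"
proof -
  have "(p - p0 * r) * (1 - q) = 0" using assms(2,3) by algebra
  then show ?thesis using assms(1) by simp
qed

lemma key_identity:
  fixes c m1 m2 m3 p1 p2 p3 :: real
  assumes "p1 = c * (c + m1 + 1)" "p2 = c * (2*p1 + c + m2 + 2*m1 + 1)"
     "p3 = c * (3*p2 + 3*p1 + c + m3 + 3*m2 + 3*m1 + 1)"
  shows "p3 - 3*m1*p2 + 3*m1^2*p1 - m1^3*c
     = c * (m3 - 3*m1*m2 + 2*m1^3) + 3*(p1 - m1*c)*(m2 - m1^2) + (p1 - m1*c) + 6*(p1 - m1*c)^2"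
  using assms by algebra


theorem lemmaA5:
  fixes E :: "nat \<Rightarrow> real" and \<mu> :: real
  assumes E_mono: "mono E"
    and E_nonneg: "\<And>j. E j \<ge> 0"
    and mu_lt: "\<mu> < E 0"
    and Z_fin: "gibbs_weight E \<mu> summable_on occ_configs"
    and mom_fin: "(\<lambda>n. gibbs_weight E \<mu> n * real (Ntot n) ^ 4) summable_on occ_configs"
  shows "let Nbar = gc_expect E \<mu> (\<lambda>x. x) in
         gc_expect E \<mu> (\<lambda>x. (x - Nbar) ^ 4)
           \<le> 9 * (gc_expect E \<mu> (\<lambda>x. (x - Nbar) ^ 2)) ^ 2 + gc_expect E \<mu> (\<lambda>x. (x - Nbar) ^ 2)"
proof -
  define w where "w = gibbs_weight E \<mu>"
  have wpos: "w n > 0" for n by (simp add: w_def gibbs_weight_def)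
  have wnn: "w n \<ge> 0" for n using wpos[of n] by simp
  have s04: "(\<lambda>n. w n + w n * real (Ntot n) ^ 4) summable_on occ_configs"
    using summable_on_add[OF Z_fin mom_fin] by (simp add: w_def)
  have sumM: "(\<lambda>n. w n * real (Ntot n) ^ k) summable_on occ_configs" if "k \<le> 4" for k
  proof (rule summable_on_comparison_test[OF s04])
    fix n
    show "0 \<le> w n * real (Ntot n) ^ k" using wnn by simp
    have "real (Ntot n) ^ k \<le> 1 + real (Ntot n) ^ 4"
    proof (cases "real (Ntot n) \<le> 1")
      case True then have "real (Ntot n) ^ k \<le> 1" by (simp add: power_le_one)
      moreover have "0 \<le> real (Ntot n) ^ 4" by simp
      ultimately show ?thesis by linarith
    next
      case False then have "real (Ntot n) ^ k \<le> real (Ntot n) ^ 4" using that by (intro power_increasing) auto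
      then show ?thesis by simp
    qed
    from mult_left_mono[OF this wnn[of n]] show "w n * real (Ntot n) ^ k \<le> w n + w n * real (Ntot n) ^ 4"
      by (simp add: distrib_left)
  qed
  define MS where "MS k = infsum (\<lambda>n. w n * real (Ntot n) ^ k) occ_configs" for k
  have hM: "((\<lambda>n. w n * real (Ntot n) ^ k) has_sum MS k) occ_configs" if "k \<le> 4" for k
    using sumM[OF that] by (simp add: MS_def)
  have nj_le: "real (n j) \<le> real (Ntot n)" if "n \<in> occ_configs" for n j
  proof (cases "n j = 0")
    case False
    have "finite {j. n j \<noteq> 0}" using that by (simp add: occ_configs_def)
    then have "n j \<le> Ntot n" unfolding Ntot_def using False by (intro member_le_sum) auto
    then show ?thesis by simp
  qed simp
  have sumP: "(\<lambda>n. w n * real (n j) * real (Ntot n) ^ k) summable_on occ_configs" if "k \<le> 3" for k j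
  proof (rule summable_on_comparison_test[OF sumM[of "Suc k"]])
    show "Suc k \<le> 4" using that by simp
    fix n assume n: "n \<in> occ_configs"
    show "0 \<le> w n * real (n j) * real (Ntot n) ^ k" using wnn by simp
    show "w n * real (n j) * real (Ntot n) ^ k \<le> w n * real (Ntot n) ^ Suc k"
      using nj_le[OF n, of j] wnn[of n] by (simp add: mult_left_mono mult_right_mono mult.assoc)
  qed
  define PS where "PS j k = infsum (\<lambda>n. w n * real (n j) * real (Ntot n) ^ k) occ_configs" for j k
  have hP: "((\<lambda>n. w n * real (n j) * real (Ntot n) ^ k) has_sum PS j k) occ_configs" if "k \<le> 3" for k j
    using sumP[OF that] by (simp add: PS_def)
  have fubP: "((\<lambda>j. PS j k) has_sum MS (Suc k)) UNIV" if "k \<le> 3" for k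
  proof -
    have "(\<lambda>n. w n * real (Ntot n) * \<bar>real (Ntot n) ^ k\<bar>) summable_on occ_configs"
      using sumM[of "Suc k"] that by (simp add: mult.assoc)
    from fubini[OF wnn this] show ?thesis
      by (simp add: PS_def MS_def mult.assoc)
  qed
  define Z where "Z = MS 0"
  have Zge: "1 \<le> Z"
  proof -
    have z: "(\<lambda>_. 0::nat) \<in> occ_configs" by (simp add: occ_configs_def)
    have "(w has_sum w (\<lambda>_. 0)) {\<lambda>_. 0}" using has_sum_finite[of "{\<lambda>_. 0::nat}" w] by simp
    moreover have "(w has_sum Z) occ_configs" using hM[of 0] by (simp add: Z_def)
    ultimately have "w (\<lambda>_. 0) \<le> Z" by (rule has_sum_mono_neutral) (use z wnn in auto)
    moreover have "w (\<lambda>_. 0) = 1" by (simp add: w_def gibbs_weight_def)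
    ultimately show ?thesis by simp
  qed
  then have Zpos: "Z > 0" and Znz: "Z \<noteq> 0" by auto
  define m where "m k = MS k / Z" for k
  define p where "p j k = PS j k / Z" for j k
  have hp: "((\<lambda>j. p j k) has_sum m (Suc k)) UNIV" if "k \<le> 3" for k
    using has_sum_divide_const[OF fubP[OF that], of Z] by (simp add: p_def m_def)
  define q where "q j = exp (-(E j - \<mu>))" for j
  have q1: "q j \<noteq> 1" for j
  proof -
    have "E 0 \<le> E j" using E_mono by (simp add: mono_def)
    then have "0 < E j - \<mu>" using mu_lt by simp
    then show ?thesis by (simp add: q_def)
  qed
  have shiftk: "PS j k = q j * infsum (\<lambda>n. w n * (real (n j) + 1) * (1 + real (Ntot n)) ^ k) occ_configs" for j k
    using shift_identity[of E \<mu> j "\<lambda>x. real x ^ k"] by (simp add: PS_def q_def w_def)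
  have e0: "PS j 0 = q j * (PS j 0 + MS 0)" for j
  proof -
    have "((\<lambda>n. w n * real (n j) * real (Ntot n) ^ 0 + w n * real (Ntot n) ^ 0) has_sum (PS j 0 + MS 0)) occ_configs"
      by (intro has_sum_add hP hM) simp_all
    then have "((\<lambda>n. w n * (real (n j) + 1) * (1 + real (Ntot n)) ^ 0) has_sum (PS j 0 + MS 0)) occ_configs"
      by (rule has_sum_cong[THEN iffD1, rotated]) (simp add: algebra_simps)
    then have i: "infsum (\<lambda>n. w n * (real (n j) + 1) * (1 + real (Ntot n)) ^ 0) occ_configs = PS j 0 + MS 0" by (rule infsumI)
    show ?thesis using shiftk[of j 0] unfolding i .
  qed
  have e1: "PS j 1 = q j * (PS j 1 + PS j 0 + MS 1 + MS 0)" for j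
  proof -
    have "((\<lambda>n. w n * real (n j) * real (Ntot n) ^ 1 + w n * real (n j) * real (Ntot n) ^ 0
        + w n * real (Ntot n) ^ 1 + w n * real (Ntot n) ^ 0) has_sum (PS j 1 + PS j 0 + MS 1 + MS 0)) occ_configs"
      by (intro has_sum_add hP hM) simp_all
    then have "((\<lambda>n. w n * (real (n j) + 1) * (1 + real (Ntot n)) ^ 1) has_sum (PS j 1 + PS j 0 + MS 1 + MS 0)) occ_configs"
      by (rule has_sum_cong[THEN iffD1, rotated]) (simp add: algebra_simps)
    then have i: "infsum (\<lambda>n. w n * (real (n j) + 1) * (1 + real (Ntot n)) ^ 1) occ_configs = PS j 1 + PS j 0 + MS 1 + MS 0" by (rule infsumI)
    show ?thesis using shiftk[of j 1] unfolding i .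
  qed
  have e2: "PS j 2 = q j * (PS j 2 + 2 * PS j 1 + PS j 0 + MS 2 + 2 * MS 1 + MS 0)" for j
  proof -
    have "((\<lambda>n. w n * real (n j) * real (Ntot n) ^ 2 + 2 * (w n * real (n j) * real (Ntot n) ^ 1)
        + w n * real (n j) * real (Ntot n) ^ 0
        + w n * real (Ntot n) ^ 2 + 2 * (w n * real (Ntot n) ^ 1) + w n * real (Ntot n) ^ 0)
        has_sum (PS j 2 + 2 * PS j 1 + PS j 0 + MS 2 + 2 * MS 1 + MS 0)) occ_configs"
      by (intro has_sum_add has_sum_cmult_right hP hM) simp_all
    then have "((\<lambda>n. w n * (real (n j) + 1) * (1 + real (Ntot n)) ^ 2) has_sum (PS j 2 + 2 * PS j 1 + PS j 0 + MS 2 + 2 * MS 1 + MS 0)) occ_configs"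
      by (rule has_sum_cong[THEN iffD1, rotated]) (simp add: algebra_simps power2_eq_square)
    then have i: "infsum (\<lambda>n. w n * (real (n j) + 1) * (1 + real (Ntot n)) ^ 2) occ_configs = PS j 2 + 2 * PS j 1 + PS j 0 + MS 2 + 2 * MS 1 + MS 0" by (rule infsumI)
    show ?thesis using shiftk[of j 2] unfolding i .
  qed
  have e3: "PS j 3 = q j * (PS j 3 + 3 * PS j 2 + 3 * PS j 1 + PS j 0 + MS 3 + 3 * MS 2 + 3 * MS 1 + MS 0)" for j
  proof -
    have "((\<lambda>n. w n * real (n j) * real (Ntot n) ^ 3 + 3 * (w n * real (n j) * real (Ntot n) ^ 2)
        + 3 * (w n * real (n j) * real (Ntot n) ^ 1) + w n * real (n j) * real (Ntot n) ^ 0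
        + w n * real (Ntot n) ^ 3 + 3 * (w n * real (Ntot n) ^ 2) + 3 * (w n * real (Ntot n) ^ 1) + w n * real (Ntot n) ^ 0)
        has_sum (PS j 3 + 3 * PS j 2 + 3 * PS j 1 + PS j 0 + MS 3 + 3 * MS 2 + 3 * MS 1 + MS 0)) occ_configs"
      by (intro has_sum_add has_sum_cmult_right hP hM) simp_all
    then have "((\<lambda>n. w n * (real (n j) + 1) * (1 + real (Ntot n)) ^ 3) has_sum (PS j 3 + 3 * PS j 2 + 3 * PS j 1 + PS j 0 + MS 3 + 3 * MS 2 + 3 * MS 1 + MS 0)) occ_configs"
      by (rule has_sum_cong[THEN iffD1, rotated]) (simp add: algebra_simps power2_eq_square power3_eq_cube)
    then have i: "infsum (\<lambda>n. w n * (real (n j) + 1) * (1 + real (Ntot n)) ^ 3) occ_configs = PS j 3 + 3 * PS j 2 + 3 * PS j 1 + PS j 0 + MS 3 + 3 * MS 2 + 3 * MS 1 + MS 0" by (rule infsumI)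
    show ?thesis using shiftk[of j 3] unfolding i .
  qed
  have MS0: "MS 0 = Z" by (simp add: Z_def)
  have n0: "p j 0 = q j * (p j 0 + 1)" for j
  proof -
    have "PS j 0 / Z = q j * (PS j 0 + MS 0) / Z" by (rule arg_cong[where f="\<lambda>x. x / Z"], rule e0)
    then show ?thesis unfolding p_def MS0 using Znz by (simp add: field_simps)
  qed
  have n1: "p j 1 = q j * (p j 1 + (p j 0 + m 1 + 1))" for j
  proof -
    have "PS j 1 / Z = q j * (PS j 1 + PS j 0 + MS 1 + MS 0) / Z" by (rule arg_cong[where f="\<lambda>x. x / Z"], rule e1)
    then show ?thesis unfolding p_def m_def MS0 using Znz by (simp add: field_simps)
  qed
  have n2: "p j 2 = q j * (p j 2 + (2 * p j 1 + p j 0 + m 2 + 2 * m 1 + 1))" for j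
  proof -
    have "PS j 2 / Z = q j * (PS j 2 + 2 * PS j 1 + PS j 0 + MS 2 + 2 * MS 1 + MS 0) / Z"
      by (rule arg_cong[where f="\<lambda>x. x / Z"], rule e2)
    then show ?thesis unfolding p_def m_def MS0 using Znz by (simp add: field_simps)
  qed
  have n3: "p j 3 = q j * (p j 3 + (3 * p j 2 + 3 * p j 1 + p j 0 + m 3 + 3 * m 2 + 3 * m 1 + 1))" for j
  proof -
    have "PS j 3 / Z = q j * (PS j 3 + 3 * PS j 2 + 3 * PS j 1 + PS j 0 + MS 3 + 3 * MS 2 + 3 * MS 1 + MS 0) / Z"
      by (rule arg_cong[where f="\<lambda>x. x / Z"], rule e3)
    then show ?thesis unfolding p_def m_def MS0 using Znz by (simp add: field_simps)
  qed
  define V where "V = m 2 - m 1 * m 1"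
  define M3c where "M3c = m 3 - 3 * m 1 * m 2 + 2 * m 1 ^ 3"
  define d where "d j = p j 1 - m 1 * p j 0" for j
  have K: "p j 3 - 3 * m 1 * p j 2 + 3 * m 1 ^ 2 * p j 1 - m 1 ^ 3 * p j 0
      = p j 0 * M3c + 3 * d j * V + d j + 6 * (d j) ^ 2"
   and dc: "d j = p j 0 * (p j 0 + 1)" for j
  proof -
    have a1: "p j 1 = p j 0 * (p j 0 + m 1 + 1)" by (rule solve_lin[OF q1 n0 n1])
    have a2: "p j 2 = p j 0 * (2 * p j 1 + p j 0 + m 2 + 2 * m 1 + 1)" by (rule solve_lin[OF q1 n0 n2])
    have a3: "p j 3 = p j 0 * (3 * p j 2 + 3 * p j 1 + p j 0 + m 3 + 3 * m 2 + 3 * m 1 + 1)"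
      by (rule solve_lin[OF q1 n0 n3])
    have "m 2 - m 1 ^ 2 = V" by (simp add: V_def power2_eq_square)
    with key_identity[OF a1 a2 a3] show "p j 3 - 3 * m 1 * p j 2 + 3 * m 1 ^ 2 * p j 1 - m 1 ^ 3 * p j 0
      = p j 0 * M3c + 3 * d j * V + d j + 6 * (d j) ^ 2"
      by (simp add: d_def M3c_def)
    show "d j = p j 0 * (p j 0 + 1)" unfolding d_def a1 by algebra
  qed
  have c_nn: "p j 0 \<ge> 0" for j
  proof -
    have "PS j 0 \<ge> 0" by (rule has_sum_nonneg[OF hP[of 0 j]]) (use wnn in simp_all)
    then show ?thesis using Zpos by (simp add: p_def)
  qed
  have dnn: "d j \<ge> 0" for j unfolding dc using c_nn[of j] by simp
  have hp0: "((\<lambda>j. p j 0) has_sum m 1) UNIV" using hp[of 0] by simp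
  have hp1: "((\<lambda>j. p j 1) has_sum m 2) UNIV" using hp[of 1] by (simp add: numeral_2_eq_2)
  have hp2: "((\<lambda>j. p j 2) has_sum m 3) UNIV" using hp[of 2] by (simp add: numeral_3_eq_3 numeral_2_eq_2)
  have hp3: "((\<lambda>j. p j 3) has_sum m 4) UNIV" using hp[of 3] by (simp add: numeral_3_eq_3 eval_nat_numeral)
  have hd: "(d has_sum V) UNIV"
  proof -
    have "((\<lambda>j. p j 1 + (- m 1) * p j 0) has_sum (m 2 + (- m 1) * m 1)) UNIV"
      by (intro has_sum_add has_sum_cmult_right hp0 hp1)
    moreover have "m 2 + (- m 1) * m 1 = V" by (simp add: V_def)
    moreover have "d = (\<lambda>j. p j 1 + (- m 1) * p j 0)" by (simp add: d_def fun_eq_iff)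
    ultimately show ?thesis by simp
  qed
  have dle: "d j \<le> V" for j
  proof -
    have "(d has_sum d j) {j}" using has_sum_finite[of "{j}" d] by simp
    from this hd show ?thesis by (rule has_sum_mono_neutral) (use dnn in auto)
  qed
  define T6 where "T6 = m 4 + (- (3 * m 1)) * m 3 + (3 * m 1 ^ 2) * m 2 + (- (m 1 ^ 3)) * m 1
        + (- M3c) * m 1 + (- (3 * V + 1)) * V"
  have h6: "((\<lambda>j. 6 * (d j) ^ 2) has_sum T6) UNIV"
  proof -
    have "((\<lambda>j. p j 3 + (- (3 * m 1)) * p j 2 + (3 * m 1 ^ 2) * p j 1 + (- (m 1 ^ 3)) * p j 0
        + (- M3c) * p j 0 + (- (3 * V + 1)) * d j) has_sum T6) UNIV"
      unfolding T6_def by (intro has_sum_add has_sum_cmult_right hp0 hp1 hp2 hp3 hd)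
    then show ?thesis
    proof (rule has_sum_cong[THEN iffD1, rotated])
      fix j
      show "p j 3 + (- (3 * m 1)) * p j 2 + (3 * m 1 ^ 2) * p j 1 + (- (m 1 ^ 3)) * p j 0
        + (- M3c) * p j 0 + (- (3 * V + 1)) * d j = 6 * (d j) ^ 2"
        using K[of j] by algebra
    qed
  qed
  have hV6: "((\<lambda>j. (6 * V) * d j) has_sum (6 * V) * V) UNIV" by (rule has_sum_cmult_right[OF hd])
  have T6le: "T6 \<le> 6 * V * V"
  proof (rule has_sum_mono[OF h6 hV6])
    fix j
    have "d j * d j \<le> V * d j" by (rule mult_right_mono[OF dle dnn])
    then show "6 * (d j) ^ 2 \<le> 6 * V * d j" by (simp add: power2_eq_square)
  qed
  have gZ: "Z_gc E \<mu> = Z" by (simp add: Z_gc_def Z_def MS_def w_def)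
  have g1: "gc_expect E \<mu> (\<lambda>x. x) = m 1"
    by (simp add: gc_expect_def gZ m_def MS_def w_def)
  have g4: "gc_expect E \<mu> (\<lambda>x. (x - a) ^ 4) = m 4 + (- 4 * a) * m 3 + (6 * a ^ 2) * m 2 + (- 4 * a ^ 3) * m 1 + a ^ 4" for a
  proof -
    have "((\<lambda>n. w n * real (Ntot n) ^ 4 + (- 4 * a) * (w n * real (Ntot n) ^ 3) + (6 * a ^ 2) * (w n * real (Ntot n) ^ 2)
         + (- 4 * a ^ 3) * (w n * real (Ntot n) ^ 1) + a ^ 4 * (w n * real (Ntot n) ^ 0))
        has_sum (MS 4 + (- 4 * a) * MS 3 + (6 * a ^ 2) * MS 2 + (- 4 * a ^ 3) * MS 1 + a ^ 4 * MS 0)) occ_configs"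
      by (intro has_sum_add has_sum_cmult_right hM) simp_all
    then have "((\<lambda>n. w n * (real (Ntot n) - a) ^ 4)
        has_sum (MS 4 + (- 4 * a) * MS 3 + (6 * a ^ 2) * MS 2 + (- 4 * a ^ 3) * MS 1 + a ^ 4 * MS 0)) occ_configs"
      by (rule has_sum_cong[THEN iffD1, rotated]) (simp add: algebra_simps power2_eq_square power3_eq_cube power4_eq_xxxx)
    then have "gc_expect E \<mu> (\<lambda>x. (x - a) ^ 4) = (MS 4 + (- 4 * a) * MS 3 + (6 * a ^ 2) * MS 2 + (- 4 * a ^ 3) * MS 1 + a ^ 4 * MS 0) / Z"
      by (simp add: gc_expect_def gZ w_def[symmetric] infsumI)
    also have "\<dots> = m 4 + (- 4 * a) * m 3 + (6 * a ^ 2) * m 2 + (- 4 * a ^ 3) * m 1 + a ^ 4"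
      unfolding m_def MS0 using Znz by (simp add: add_divide_distrib diff_divide_distrib)
    finally show ?thesis .
  qed
  have g2: "gc_expect E \<mu> (\<lambda>x. (x - a) ^ 2) = m 2 + (- 2 * a) * m 1 + a ^ 2" for a
  proof -
    have "((\<lambda>n. w n * real (Ntot n) ^ 2 + (- 2 * a) * (w n * real (Ntot n) ^ 1) + a ^ 2 * (w n * real (Ntot n) ^ 0))
        has_sum (MS 2 + (- 2 * a) * MS 1 + a ^ 2 * MS 0)) occ_configs"
      by (intro has_sum_add has_sum_cmult_right hM) simp_all
    then have "((\<lambda>n. w n * (real (Ntot n) - a) ^ 2)
        has_sum (MS 2 + (- 2 * a) * MS 1 + a ^ 2 * MS 0)) occ_configs"
      by (rule has_sum_cong[THEN iffD1, rotated]) (simp add: algebra_simps power2_eq_square)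
    then have "gc_expect E \<mu> (\<lambda>x. (x - a) ^ 2) = (MS 2 + (- 2 * a) * MS 1 + a ^ 2 * MS 0) / Z"
      by (simp add: gc_expect_def gZ w_def[symmetric] infsumI)
    also have "\<dots> = m 2 + (- 2 * a) * m 1 + a ^ 2"
      unfolding m_def MS0 using Znz by (simp add: add_divide_distrib diff_divide_distrib)
    finally show ?thesis .
  qed
  have fin: "(m 4 + (- 4 * m 1) * m 3 + (6 * m 1 ^ 2) * m 2 + (- 4 * m 1 ^ 3) * m 1 + m 1 ^ 4)
      - (9 * (m 2 + (- 2 * m 1) * m 1 + m 1 ^ 2) ^ 2 + (m 2 + (- 2 * m 1) * m 1 + m 1 ^ 2))
      = T6 - 6 * V * V"
    unfolding T6_def V_def M3c_def by algebra
  show ?thesis unfolding Let_def g1 g4 g2 using fin T6le by linarith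
qed

end
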